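(* Let $P_1,\dots,P_m$ be nonzero univariate complex polynomials of degrees $k_1,\dots,k_m\ge1$. Then $$\|P_1\|\cdots\|P_m\|\le\min\Big\{\sqrt{\frac{(k_1+\dots+k_m)!}{k_1!\cdots k_m!}},\ \sqrt{\frac{e^{k_1+\dots+k_m}}{k_1+\dots+k_m+1}}\Big\}\,\|P_1\cdots P_m\|,$$ where $\|\cdot\|$ is the Bombieri–Weyl norm.
   Context: The Bombieri–Weyl norm of a univariate polynomial $P(z)=\sum_{i=0}^k a_iz^i$ of degree $k$ is $\|P\|=(\sum_{i=0}^k\binom{k}{i}^{-1}|a_i|^2)^{1/2}$, i.e. the norm of its homogenization $\sum a_ix^iy^{k-i}$. *)

theory Defs
  imports "HOL-Analysis.Analysis" "HOL-Computational_Algebra.Polynomial"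
begin

definition bw_norm :: "complex poly \<Rightarrow> real" where
  "bw_norm P = sqrt (\<Sum>i\<le>degree P. (cmod (coeff P i))\<^sup>2 / real (degree P choose i))"

end

theory Submission
  imports Defs "HOL-Real_Asymp.Real_Asymp" "HOL-Computational_Algebra.Fundamental_Theorem_Algebra"
begin


definition ip :: "nat \<Rightarrow> complex poly \<Rightarrow> complex poly \<Rightarrow> complex" where
  "ip d f g = (\<Sum>i\<le>d. coeff f i * cnj (coeff g i) * of_nat (fact i * fact (d - i)))"

definition dY :: "nat \<Rightarrow> complex poly \<Rightarrow> complex poly" where
  "dY d f = smult (of_nat d) f - pCons 0 (pderiv f)"

definition dd :: "bool \<Rightarrow> nat \<Rightarrow> complex poly \<Rightarrow> complex poly" where
  "dd u d f = (if u then pderiv f else dY d f)"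

definition mm :: "bool \<Rightarrow> complex poly \<Rightarrow> complex poly" where
  "mm u f = (if u then pCons 0 f else f)"

fun ds :: "bool list \<Rightarrow> nat \<Rightarrow> complex poly \<Rightarrow> complex poly" where
  "ds [] d f = f"
| "ds (u # w) d f = dd u (d - length w) (ds w d f)"

lemma coeff_dY: "coeff (dY d f) i = (of_nat d - of_nat i) * coeff f i"
  by (cases i) (auto simp: dY_def coeff_pderiv algebra_simps)

lemma dd_0[simp]: "dd u d 0 = 0"
  by (auto simp: dd_def dY_def)

lemma dd_add: "dd u d (f + g) = dd u d f + dd u d g"
  by (auto simp: dd_def dY_def pderiv_add smult_add_right)

lemma dd_smult: "dd u d (smult c f) = smult c (dd u d f)"
  by (auto simp: dd_def dY_def pderiv_smult smult_diff_right mult.commute)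

lemma degree_dd: assumes "degree f \<le> d" shows "degree (dd u d f) \<le> d - 1"
proof (cases u)
  case True thus ?thesis using assms by (simp add: dd_def degree_pderiv)
next
  case False
  have "degree (dY d f) \<le> d - 1"
  proof (intro degree_le allI impI)
    fix i assume "d - 1 < i"
    hence "d < i \<or> i = d" by auto
    thus "coeff (dY d f) i = 0"
      using assms by (auto simp: coeff_dY coeff_eq_0)
  qed
  thus ?thesis using False by (simp add: dd_def)
qed

lemma dd_deg0: assumes "degree f = 0" shows "dd u 0 f = 0"
proof -
  have "pderiv f = 0" using assms by (simp add: pderiv_eq_0_iff)
  thus ?thesis by (simp add: dd_def dY_def)
qed

lemma degree_ds: "degree f \<le> d \<Longrightarrow> degree (ds w d f) \<le> d - length w"
proof (induction w)
  case Nil thus ?case by simp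
next
  case (Cons u w)
  have "degree (dd u (d - length w) (ds w d f)) \<le> d - length w - 1"
    by (rule degree_dd) (use Cons in auto)
  thus ?case by simp
qed

lemma ds_zero: assumes "degree f \<le> d" "d < length w" shows "ds w d f = 0"
  using assms
proof (induction w)
  case Nil thus ?case by simp
next
  case (Cons u w)
  show ?case
  proof (cases "d < length w")
    case True thus ?thesis using Cons by simp
  next
    case False
    hence "d = length w" using Cons by simp
    moreover have "degree (ds w d f) \<le> 0" using degree_ds[OF Cons(2), of w] \<open>d = length w\<close> by simp
    ultimately show ?thesis by (simp add: dd_deg0)
  qed
qed

lemma adjoint:
  assumes "degree f \<le> d"
  shows "ip (Suc d) (mm u f) g = ip d f (dd u (Suc d) g)"
proof (cases u)
  case True
  have "ip (Suc d) (mm u f) g = (\<Sum>i\<le>Suc d. coeff (pCons 0 f) i * cnj (coeff g i) * of_nat (fact i * fact (Suc d - i)))"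
    using True by (simp add: ip_def mm_def)
  also have "\<dots> = (\<Sum>i\<le>d. coeff f i * cnj (coeff g (Suc i)) * of_nat (fact (Suc i) * fact (d - i)))"
    by (subst sum.atMost_Suc_shift) simp
  also have "\<dots> = ip d f (dd u (Suc d) g)"
    using True by (simp add: ip_def dd_def coeff_pderiv algebra_simps)
  finally show ?thesis .
next
  case False
  have "ip (Suc d) (mm u f) g = (\<Sum>i\<le>Suc d. coeff f i * cnj (coeff g i) * of_nat (fact i * fact (Suc d - i)))"
    using False by (simp add: ip_def mm_def)
  also have "\<dots> = (\<Sum>i\<le>d. coeff f i * cnj (coeff g i) * of_nat (fact i * fact (Suc d - i)))"
    using assms by (simp add: coeff_eq_0)
  also have "\<dots> = (\<Sum>i\<le>d. coeff f i * cnj ((of_nat (Suc d) - of_nat i) * coeff g i) * of_nat (fact i * fact (d - i)))"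
  proof (rule sum.cong)
    fix i assume "i \<in> {..d}"
    hence "Suc d - i = Suc (d - i)" by auto
    hence "fact (Suc d - i) = (of_nat (Suc d) - of_nat i) * (fact (d - i) :: complex)"
      using \<open>i \<in> {..d}\<close> by (simp add: of_nat_diff)
    thus "coeff f i * cnj (coeff g i) * of_nat (fact i * fact (Suc d - i)) =
      coeff f i * cnj ((of_nat (Suc d) - of_nat i) * coeff g i) * of_nat (fact i * fact (d - i))"
      by (simp add: of_nat_mult)
  qed simp
  also have "\<dots> = ip d f (dd u (Suc d) g)"
    using False by (simp add: ip_def dd_def coeff_dY)
  finally show ?thesis .
qed


lemma pCons0_mult: "pCons 0 (f::complex poly) = [:0,1:] * f"
  by simp

lemma pCons0_add: "pCons (0::complex) (a + b) = pCons 0 a + pCons 0 b" by simp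
lemma leibnizY: "dY (d + e) (f * g) = dY d f * g + f * dY e g"
proof -
  have "dY (d + e) (f * g) = smult (of_nat d) (f*g) + smult (of_nat e) (f*g) - (pCons 0 (f * pderiv g) + pCons 0 (g * pderiv f))"
    unfolding dY_def pderiv_mult of_nat_add smult_add_left pCons0_add ..
  also have "\<dots> = dY d f * g + f * dY e g"
    unfolding dY_def left_diff_distrib right_diff_distrib mult_smult_left mult_smult_right
    by (simp add: mult_pCons_right mult.commute[of g])
  finally show ?thesis .
qed
lemma keyc: "pderiv (dY (Suc e) f) = dY e (pderiv f)"
proof -
  have "pderiv (dY (Suc e) f) = smult (of_nat e) (pderiv f) + pderiv f - (pderiv f + pCons 0 (pderiv (pderiv f)))"
    unfolding dY_def pderiv_diff pderiv_smult pderiv_pCons of_nat_Suc smult_add_left by (simp add: pderiv_add pderiv_smult)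
  also have "\<dots> = smult (of_nat e) (pderiv f) - pCons 0 (pderiv (pderiv f))" by simp
  also have "\<dots> = dY e (pderiv f)" by (simp add: dY_def)
  finally show ?thesis .
qed

lemma leibniz: "dd u (d + e) (f * g) = dd u d f * g + f * dd u e g"
  by (cases u) (simp_all add: dd_def pderiv_mult leibnizY mult.commute)

lemma euler: "smult (of_nat d) f = mm True (dd True d f) + mm False (dd False d f)"
  by (simp add: mm_def dd_def dY_def)

lemma mm_mult: "mm u (a * g) = a * mm u g"
  by (simp add: mm_def mult_pCons_right)

lemma comm_Suc: "dd a e (dd b (Suc e) f) = dd b e (dd a (Suc e) f)"
  by (cases a; cases b) (simp_all add: dd_def keyc)

lemma ds_snoc: "ds (w @ [u]) d f = ds w (d - 1) (dd u d f)"
  by (induction w) auto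

lemma ds_comm: assumes "degree f \<le> d"
  shows "ds (u # w) d f = ds w (d - 1) (dd u d f)"
proof (induction w)
  case Nil thus ?case by (simp add: smult_one)
next
  case (Cons a w)
  have "ds (u # a # w) d f = dd u (d - Suc (length w)) (dd a (d - length w) (ds w d f))" by (simp add: smult_one)
  also have "\<dots> = dd a (d - Suc (length w)) (dd u (d - length w) (ds w d f))"
  proof (cases "d - length w")
    case 0
    have "degree (ds w d f) \<le> 0" using degree_ds[OF assms, of w] 0 by (simp add: smult_one)
    hence "dd a 0 (ds w d f) = 0" "dd u 0 (ds w d f) = 0" by (auto intro: dd_deg0)
    thus ?thesis using 0 by (simp add: smult_one)
  next
    case (Suc e)
    hence "d - Suc (length w) = e" by (simp add: smult_one)
    thus ?thesis using Suc comm_Suc by (simp add: smult_one)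
  qed
  also have "\<dots> = dd a (d - 1 - length w) (ds w (d - 1) (dd u d f))"
    using Cons by (simp add: smult_one)
  also have "\<dots> = ds (a # w) (d - 1) (dd u d f)" by (simp add: smult_one)
  finally show ?case .
qed

lemma ip_0_left[simp]: "ip d 0 g = 0" by (simp add: ip_def)
lemma ip_0_right[simp]: "ip d f 0 = 0" by (simp add: ip_def)
lemma ip_add_left: "ip d (f + g) h = ip d f h + ip d g h"
  by (simp add: ip_def algebra_simps sum.distrib)
lemma ip_add_right: "ip d h (f + g) = ip d h f + ip d h g"
  by (simp add: ip_def algebra_simps sum.distrib)
lemma ip_smult_left: "ip d (smult c f) h = c * ip d f h"
  by (simp add: ip_def sum_distrib_left algebra_simps)
lemma ip_smult_right: "ip d h (smult c f) = cnj c * ip d h f"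
  by (simp add: ip_def sum_distrib_left algebra_simps)
lemma ip_sum_left: "finite A \<Longrightarrow> ip d (\<Sum>x\<in>A. F x) h = (\<Sum>x\<in>A. ip d (F x) h)"
  by (induction A rule: finite_induct) (auto simp: ip_add_left)
lemma ip_cnj: "cnj (ip d f g) = ip d g f"
  by (simp add: ip_def algebra_simps)

definition L :: "nat \<Rightarrow> bool list set" where "L n = {w. length w = n}"

lemma finite_L[simp]: "finite (L n)"
  using finite_lists_length_eq[of "UNIV :: bool set" n] by (simp add: L_def)

lemma L_0[simp]: "L 0 = {[]}" by (auto simp: L_def)

lemma sum_L_Suc: "(\<Sum>w\<in>L (Suc n). F w) = (\<Sum>u\<in>UNIV. \<Sum>w\<in>L n. F (u # w))"
proof -
  have eq: "L (Suc n) = (\<lambda>(u, w). u # w) ` (UNIV \<times> L n)"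
  proof (rule set_eqI, rule iffI)
    fix x assume "x \<in> L (Suc n)"
    then obtain u w where "x = u # w" "length w = n" by (auto simp: L_def length_Suc_conv)
    thus "x \<in> (\<lambda>(u, w). u # w) ` (UNIV \<times> L n)" by (auto simp: L_def)
  qed (auto simp: L_def)
  have inj: "inj_on (\<lambda>(u, w). u # w) (UNIV \<times> L n)" by (rule inj_onI) auto
  have "(\<Sum>w\<in>L (Suc n). F w) = sum (F \<circ> (\<lambda>(u, w). u # w)) (UNIV \<times> L n)"
    unfolding eq by (rule sum.reindex[OF inj])
  also have "\<dots> = (\<Sum>(u,w)\<in>UNIV \<times> L n. F (u # w))"
    by (intro sum.cong refl) auto
  also have "\<dots> = (\<Sum>u\<in>UNIV. \<Sum>w\<in>L n. F (u # w))"
    by (rule sum.cartesian_product[of "\<lambda>u w. F (u # w)" "L n" UNIV, symmetric])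
  finally show ?thesis .
qed

definition G :: "nat \<Rightarrow> nat \<Rightarrow> nat \<Rightarrow> complex poly \<Rightarrow> nat \<Rightarrow> complex poly \<Rightarrow> complex" where
  "G i j k p l q = (\<Sum>v\<in>L i. \<Sum>w\<in>L j. ip (k - i + (l - j)) (ds v k p * ds w l q) (ds w k p * ds v l q))"

lemma ip_swap_aux: "ip (a + b) (x * y) (z * t) = ip (b + a) (y * x) (t * z)"
  by (simp add: mult.commute add.commute)

lemma G_sym: "G i j k p l q = G j i l q k p"
proof -
  have "G i j k p l q = (\<Sum>w\<in>L j. \<Sum>v\<in>L i. ip (k - i + (l - j)) (ds v k p * ds w l q) (ds w k p * ds v l q))"
    unfolding G_def by (rule sum.swap)
  also have "\<dots> = G j i l q k p" unfolding G_def
    by (rule sum.cong[OF refl], rule sum.cong[OF refl], rule ip_swap_aux)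
  finally show ?thesis .
qed


lemma sum_bool: "(\<Sum>u\<in>(UNIV::bool set). F u) = F True + F False"
  by (simp add: UNIV_bool add.commute)

lemma term_rec:
  assumes dp: "degree p \<le> k" and dq: "degree q \<le> l" and jl: "j < l"
    and lv: "length v = i" and lw: "length w = j"
  shows "of_nat (l - j) * ip (k - i + (l - j)) (ds v k p * ds w l q) (ds w k p * ds v l q)
   = (\<Sum>u\<in>UNIV. ip (k - i + (l - Suc j)) (ds v k p * ds (u#w) l q) (ds (u#w) k p * ds v l q))
   + (\<Sum>u\<in>UNIV. ip (k - i + (l - Suc j)) (ds v k p * ds (u#w) l q) (ds w k p * ds (u#v) l q))"
proof -
  define a where "a = ds v k p"
  define g where "g = ds w l q"
  define b1 where "b1 = ds w k p"
  define b2 where "b2 = ds v l q"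
  have uw: "ds (u#w) l q = dd u (l - j) g" for u using lw by (simp add: g_def)
  have uw2: "ds (u#w) k p = dd u (k - j) b1" for u using lw by (simp add: b1_def)
  have uv: "ds (u#v) l q = dd u (l - i) b2" for u using lv by (simp add: b2_def)
  show ?thesis
  proof (cases "a = 0 \<or> b1 = 0 \<or> b2 = 0")
    case True
    thus ?thesis unfolding uw uw2 uv a_def[symmetric] g_def[symmetric] b1_def[symmetric] b2_def[symmetric]
      by auto
  next
    case False
    hence a0: "a \<noteq> 0" and b10: "b1 \<noteq> 0" and b20: "b2 \<noteq> 0" by auto
    have ik: "i \<le> k" using a0 ds_zero[OF dp, of v] lv by (force simp: a_def)
    have jk: "j \<le> k" using b10 ds_zero[OF dp, of w] lw by (force simp: b1_def)
    have il: "i \<le> l" using b20 ds_zero[OF dq, of v] lv by (force simp: b2_def)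
    define e where "e = k - i + (l - j)"
    have eS: "e = Suc (k - i + (l - Suc j))" using jl by (simp add: e_def)
    have e2: "e = (k - j) + (l - i)" using ik jk il jl by (simp add: e_def)
    have da: "degree a \<le> k - i" using degree_ds[OF dp, of v] lv by (simp add: a_def)
    have dg: "degree g \<le> l - j" using degree_ds[OF dq, of w] lw by (simp add: g_def)
    have degX: "degree (a * dd u (l - j) g) \<le> k - i + (l - Suc j)" for u
    proof -
      have "degree (dd u (l - j) g) \<le> l - j - 1" by (rule degree_dd[OF dg])
      hence "degree (a * dd u (l - j) g) \<le> (k - i) + (l - j - 1)"
        using da degree_mult_le[of a "dd u (l - j) g"] by linarith
      thus ?thesis by simp
    qed
    have step: "ip e (mm u (a * dd u (l - j) g)) (b1 * b2) =
       ip (k - i + (l - Suc j)) (a * dd u (l - j) g) (dd u (k - j) b1 * b2)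
     + ip (k - i + (l - Suc j)) (a * dd u (l - j) g) (b1 * dd u (l - i) b2)" for u
    proof -
      have "ip e (mm u (a * dd u (l - j) g)) (b1 * b2) =
          ip (k - i + (l - Suc j)) (a * dd u (l - j) g) (dd u e (b1 * b2))"
        unfolding eS by (rule adjoint[OF degX])
      also have "dd u e (b1 * b2) = dd u (k - j) b1 * b2 + b1 * dd u (l - i) b2"
        unfolding e2 by (rule leibniz)
      finally show ?thesis by (simp add: ip_add_right)
    qed
    have "of_nat (l - j) * ip e (a * g) (b1 * b2) = ip e (a * smult (of_nat (l - j)) g) (b1 * b2)"
      by (simp add: ip_smult_left[symmetric] mult_smult_right)
    also have "a * smult (of_nat (l - j)) g = mm True (a * dd True (l - j) g) + mm False (a * dd False (l - j) g)"
      by (subst euler) (simp add: mm_mult distrib_left)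
    finally have "of_nat (l - j) * ip e (a * g) (b1 * b2) =
       ip e (mm True (a * dd True (l - j) g)) (b1 * b2) + ip e (mm False (a * dd False (l - j) g)) (b1 * b2)"
      by (simp add: ip_add_left)
    thus ?thesis unfolding uw uw2 uv a_def[symmetric] g_def[symmetric] b1_def[symmetric] b2_def[symmetric]
        e_def[symmetric] sum_bool step by simp
  qed
qed

lemma G_rec:
  assumes dp: "degree p \<le> k" and dq: "degree q \<le> l" and jl: "j < l"
  shows "of_nat (l - j) * G i j k p l q = G i (Suc j) k p l q + (\<Sum>u\<in>UNIV. G i j k p (l - 1) (dd u l q))"
proof -
  define T where "T v w = ip (k - i + (l - Suc j)) (ds v k p * ds w l q) (ds w k p * ds v l q)" for v w
  define H where "H u v w = ip (k - i + (l - Suc j)) (ds v k p * ds (u#w) l q) (ds w k p * ds (u#v) l q)" for u v w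
  have "of_nat (l - j) * G i j k p l q = (\<Sum>v\<in>L i. \<Sum>w\<in>L j.
      of_nat (l - j) * ip (k - i + (l - j)) (ds v k p * ds w l q) (ds w k p * ds v l q))"
    unfolding G_def by (simp add: sum_distrib_left)
  also have "\<dots> = (\<Sum>v\<in>L i. \<Sum>w\<in>L j. (\<Sum>u\<in>UNIV. T v (u#w)) + (\<Sum>u\<in>UNIV. H u v w))"
    by (intro sum.cong refl, unfold T_def H_def, rule term_rec[OF dp dq jl]) (auto simp: L_def)
  also have "\<dots> = (\<Sum>v\<in>L i. \<Sum>w\<in>L j. \<Sum>u\<in>UNIV. T v (u#w)) + (\<Sum>v\<in>L i. \<Sum>w\<in>L j. \<Sum>u\<in>UNIV. H u v w)"
    by (simp only: sum.distrib)
  also have "(\<Sum>v\<in>L i. \<Sum>w\<in>L j. \<Sum>u\<in>UNIV. T v (u#w)) = (\<Sum>v\<in>L i. \<Sum>w\<in>L (Suc j). T v w)"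
  proof (rule sum.cong[OF refl])
    fix v show "(\<Sum>w\<in>L j. \<Sum>u\<in>UNIV. T v (u#w)) = (\<Sum>w\<in>L (Suc j). T v w)"
      by (subst sum_L_Suc) (rule sum.swap)
  qed
  also have "(\<Sum>v\<in>L i. \<Sum>w\<in>L (Suc j). T v w) = G i (Suc j) k p l q"
    unfolding G_def T_def ..
  also have "(\<Sum>v\<in>L i. \<Sum>w\<in>L j. \<Sum>u\<in>UNIV. H u v w) = (\<Sum>u\<in>UNIV. \<Sum>v\<in>L i. \<Sum>w\<in>L j. H u v w)"
  proof -
    have "(\<Sum>v\<in>L i. \<Sum>w\<in>L j. \<Sum>u\<in>UNIV. H u v w) = (\<Sum>v\<in>L i. \<Sum>u\<in>UNIV. \<Sum>w\<in>L j. H u v w)"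
      by (intro sum.cong refl, rule sum.swap)
    also have "\<dots> = (\<Sum>u\<in>UNIV. \<Sum>v\<in>L i. \<Sum>w\<in>L j. H u v w)"
      by (rule sum.swap)
    finally show ?thesis .
  qed
  also have "\<dots> = (\<Sum>u\<in>UNIV. G i j k p (l - 1) (dd u l q))"
  proof (rule sum.cong[OF refl])
    fix u
    show "(\<Sum>v\<in>L i. \<Sum>w\<in>L j. H u v w) = G i j k p (l - 1) (dd u l q)"
    proof -
      have "k - i + (l - 1 - j) = k - i + (l - Suc j)" by simp
      thus ?thesis unfolding G_def H_def ds_comm[OF dq] by simp
    qed
  qed
  finally show ?thesis .
qed

definition nn :: "complex \<Rightarrow> bool" where "nn z \<longleftrightarrow> Im z = 0 \<and> 0 \<le> Re z"

lemma nn_add: "nn a \<Longrightarrow> nn b \<Longrightarrow> nn (a + b)" by (simp add: nn_def)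
lemma nn_sum: "(\<And>x. x \<in> A \<Longrightarrow> nn (f x)) \<Longrightarrow> nn (\<Sum>x\<in>A. f x)"
  by (induction A rule: infinite_finite_induct) (auto simp: nn_add nn_def)
lemma nn_div: "nn a \<Longrightarrow> nn (a / of_nat n)" by (simp add: nn_def Re_divide Im_divide)
lemma nn_cnj: "nn (z * cnj z)" by (simp add: nn_def)
lemma nn_0: "nn 0" by (simp add: nn_def)

lemma ip_0_eq: "ip 0 f g = coeff f 0 * cnj (coeff g 0)" by (simp add: ip_def)

lemma G_base:
  assumes dp: "degree p \<le> k" and dq: "degree q \<le> l" and ik: "k \<le> i" and jl: "l \<le> j"
  shows "nn (G i j k p l q)"
proof -
  define a where "a v = coeff (ds v k p) 0" for v
  define b where "b v = coeff (ds v l q) 0" for v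
  have "G i j k p l q = (\<Sum>v\<in>L i. \<Sum>w\<in>L j. (a v * cnj (b v)) * (b w * cnj (a w)))"
    unfolding G_def using ik jl by (intro sum.cong refl) (simp add: ip_0_eq coeff_mult_0 a_def b_def)
  also have "\<dots> = (\<Sum>v\<in>L i. a v * cnj (b v)) * (\<Sum>w\<in>L j. b w * cnj (a w))"
    by (simp add: sum_product)
  finally have eq: "G i j k p l q = (\<Sum>v\<in>L i. a v * cnj (b v)) * (\<Sum>w\<in>L j. b w * cnj (a w))" .
  consider "i = j" | "i < j" | "j < i" by linarith
  thus ?thesis
  proof cases
    case 1
    have "(\<Sum>w\<in>L j. b w * cnj (a w)) = cnj (\<Sum>v\<in>L i. a v * cnj (b v))"
      using 1 by (simp add: mult.commute)
    thus ?thesis using eq nn_cnj[of "\<Sum>v\<in>L i. a v * cnj (b v)"] by metis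
  next
    case 2
    have "(\<Sum>w\<in>L j. b w * cnj (a w)) = 0"
      by (intro sum.neutral ballI) (use 2 ik in \<open>auto simp: a_def L_def ds_zero[OF dp]\<close>)
    thus ?thesis using eq nn_0 by simp
  next
    case 3
    have "(\<Sum>v\<in>L i. a v * cnj (b v)) = 0"
      by (intro sum.neutral ballI) (use 3 jl in \<open>auto simp: b_def L_def ds_zero[OF dq]\<close>)
    thus ?thesis using eq nn_0 by simp
  qed
qed

lemma G_nn: "degree p \<le> k \<Longrightarrow> degree q \<le> l \<Longrightarrow> nn (G i j k p l q)"
proof (induction "(k - i) + (l - j)" arbitrary: i j k p l q rule: less_induct)
  case less
  have rec: "nn (G i j k p l q)" if jl: "j < l" and dp: "degree p \<le> k" and dq: "degree q \<le> l"
    and IH: "\<And>i' j' k' p' l' q'. k' - i' + (l' - j') < k - i + (l - j) \<Longrightarrow> degree p' \<le> k' \<Longrightarrow>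
          degree q' \<le> l' \<Longrightarrow> nn (G i' j' k' p' l' q')" for i j k p l q
  proof -
    have "G i j k p l q = (G i (Suc j) k p l q + (\<Sum>u\<in>UNIV. G i j k p (l - 1) (dd u l q))) / of_nat (l - j)"
      using G_rec[OF dp dq jl, of i] jl by (simp add: field_simps)
    moreover have "nn (G i (Suc j) k p l q)" by (rule IH) (use jl dp dq in auto)
    moreover have "nn (G i j k p (l - 1) (dd u l q))" for u
      by (rule IH) (use jl dp dq degree_dd[OF dq, of u] in auto)
    ultimately show ?thesis by (simp add: nn_div nn_add nn_sum)
  qed
  consider "j < l" | "i < k" "\<not> j < l" | "\<not> i < k" "\<not> j < l" by blast
  thus ?case
  proof cases
    case 1 thus ?thesis using rec[OF 1 less(2) less(3) less(1)] by blast
  next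
    case 2
    have "nn (G j i l q k p)"
      by (rule rec[OF 2(1) less(3) less(2)]) (rule less(1), auto)
    thus ?thesis by (simp add: G_sym)
  next
    case 3 thus ?thesis using G_base[OF less(2) less(3)] by simp
  qed
qed

lemma G00: "G 0 0 k p l q = ip (k + l) (p * q) (p * q)"
  by (simp add: G_def)

lemma nn_ip: "nn (ip d f f)"
  unfolding ip_def by (intro nn_sum) (simp add: nn_def)

lemma euler_norm:
  assumes dp: "degree p \<le> Suc k"
  shows "of_nat (Suc k) * ip (Suc k) p p = (\<Sum>u\<in>UNIV. ip k (dd u (Suc k) p) (dd u (Suc k) p))"
proof -
  have d1: "degree (1::complex poly) \<le> 0" by simp
  have "of_nat (Suc k - 0) * G 0 0 0 1 (Suc k) p = G 0 (Suc 0) 0 1 (Suc k) p + (\<Sum>u\<in>UNIV. G 0 0 0 1 (Suc k - 1) (dd u (Suc k) p))"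
    by (rule G_rec[OF d1 dp]) simp
  moreover have "G 0 (Suc 0) 0 1 (Suc k) p = 0"
    unfolding G_def by (intro sum.neutral ballI) (auto simp: L_def ds_zero[OF d1])
  ultimately show ?thesis by (simp add: G00)
qed

lemma bombieri_fock:
  assumes "degree p \<le> k" "degree q \<le> l"
  shows "Re (ip k p p) * Re (ip l q q) \<le> Re (ip (k + l) (p * q) (p * q))"
  using assms
proof (induction k arbitrary: p)
  case 0
  define c where "c = coeff p 0"
  have p: "p = [:c:]" using 0 by (simp add: c_def degree_0_id)
  have pq: "p * q = smult c q" by (simp add: p)
  have cc: "c * cnj c = of_real ((cmod c)^2)" by (metis complex_norm_square of_real_power)
  have "ip l (p * q) (p * q) = of_real ((cmod c)^2) * ip l q q"
    unfolding pq ip_smult_left ip_smult_right cc[symmetric] by (simp add: algebra_simps)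
  moreover have "ip 0 p p = of_real ((cmod c)^2)" using cc by (simp add: ip_0_eq p)
  ultimately show ?case by simp
next
  case (Suc k)
  have dq: "degree q \<le> l" by fact
  have "of_nat (Suc k - 0) * G 0 0 l q (Suc k) p = G 0 (Suc 0) l q (Suc k) p + (\<Sum>u\<in>UNIV. G 0 0 l q (Suc k - 1) (dd u (Suc k) p))"
    by (rule G_rec[OF dq Suc(2)]) simp
  hence eq: "of_nat (Suc k) * ip (Suc k + l) (p * q) (p * q) = G 0 (Suc 0) l q (Suc k) p
      + (\<Sum>u\<in>UNIV. ip (k + l) (dd u (Suc k) p * q) (dd u (Suc k) p * q))"
    by (simp add: G_sym[of 0 0 l q] G00 mult.commute add.commute)
  have "nn (G 0 (Suc 0) l q (Suc k) p)" by (rule G_nn[OF dq Suc(2)])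
  hence g0: "Re (G 0 (Suc 0) l q (Suc k) p) \<ge> 0" by (simp add: nn_def)
  have dpu: "degree (dd u (Suc k) p) \<le> k" for u using degree_dd[OF Suc(2), of u] by simp
  have ih: "Re (ip k (dd u (Suc k) p) (dd u (Suc k) p)) * Re (ip l q q) \<le> Re (ip (k + l) (dd u (Suc k) p * q) (dd u (Suc k) p * q))" for u
    by (rule Suc.IH[OF dpu dq])
  have "real (Suc k) * (Re (ip (Suc k) p p) * Re (ip l q q)) = Re (of_nat (Suc k) * ip (Suc k) p p) * Re (ip l q q)"
    by simp
  also have "\<dots> = (\<Sum>u\<in>UNIV. Re (ip k (dd u (Suc k) p) (dd u (Suc k) p)) * Re (ip l q q))"
    unfolding euler_norm[OF Suc(2)] by (simp add: sum_bool algebra_simps)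
  also have "\<dots> \<le> (\<Sum>u\<in>UNIV. Re (ip (k + l) (dd u (Suc k) p * q) (dd u (Suc k) p * q)))"
    by (rule sum_mono[OF ih])
  also have "\<dots> \<le> Re (of_nat (Suc k) * ip (Suc k + l) (p * q) (p * q))"
    unfolding eq using g0 by (simp add: sum_bool)
  also have "\<dots> = real (Suc k) * Re (ip (Suc k + l) (p * q) (p * q))" by simp
  finally show ?case by (simp only: mult_le_cancel_left_pos)
qed


lemma Re_ip_self: "Re (ip k P P) = (\<Sum>i\<le>k. (cmod (coeff P i))^2 * (fact i * fact (k - i)))"
  unfolding ip_def Re_sum
  by (intro sum.cong refl) (simp add: complex_mult_cnj cmod_def power2_eq_square)

lemma bw_sq: "bw_norm P ^ 2 = Re (ip (degree P) P P) / fact (degree P)"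
proof -
  define k where "k = degree P"
  have "bw_norm P ^ 2 = (\<Sum>i\<le>k. (cmod (coeff P i))\<^sup>2 / real (k choose i))"
    unfolding bw_norm_def k_def by (intro real_sqrt_pow2 sum_nonneg) auto
  also have "\<dots> = (\<Sum>i\<le>k. (cmod (coeff P i))^2 * (fact i * fact (k - i)) / fact k)"
    by (intro sum.cong refl) (simp add: binomial_fact)
  also have "\<dots> = Re (ip k P P) / fact k"
    unfolding Re_ip_self by (simp add: sum_divide_distrib)
  finally show ?thesis by (simp add: k_def)
qed

lemma bomb2:
  assumes "P \<noteq> 0" "Q \<noteq> 0"
  shows "bw_norm P ^ 2 * bw_norm Q ^ 2 \<le>
    fact (degree P + degree Q) / (fact (degree P) * fact (degree Q)) * bw_norm (P * Q) ^ 2"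
proof -
  define k l where "k = degree P" "l = degree Q"
  have dpq: "degree (P * Q) = k + l" using assms by (simp add: degree_mult_eq k_l_def)
  have b: "Re (ip k P P) * Re (ip l Q Q) \<le> Re (ip (k + l) (P * Q) (P * Q))"
    by (rule bombieri_fock) (auto simp: k_l_def)
  have "bw_norm P ^ 2 * bw_norm Q ^ 2 = Re (ip k P P) * Re (ip l Q Q) / (fact k * fact l)"
    by (simp add: bw_sq k_l_def)
  also have "\<dots> \<le> Re (ip (k + l) (P * Q) (P * Q)) / (fact k * fact l)"
    by (intro divide_right_mono b) auto
  also have "\<dots> = fact (k + l) / (fact k * fact l) * bw_norm (P * Q) ^ 2"
    by (simp add: bw_sq dpq)
  finally show ?thesis by (simp add: k_l_def)
qed

lemma bombA:
  fixes m :: nat and P :: "nat \<Rightarrow> complex poly"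
  assumes "\<And>j. j < m \<Longrightarrow> P j \<noteq> 0"
  shows "(\<Prod>j<m. bw_norm (P j) ^ 2) \<le>
    fact (\<Sum>j<m. degree (P j)) / (\<Prod>j<m. fact (degree (P j))) * bw_norm (\<Prod>j<m. P j) ^ 2"
  using assms
proof (induction m)
  case 0
  have "bw_norm 1 ^ 2 = 1" by (simp add: bw_sq ip_0_eq)
  thus ?case by simp
next
  case (Suc m)
  define S where "S = (\<Sum>j<m. degree (P j))"
  define F where "F = (\<Prod>j<m. fact (degree (P j)) :: real)"
  define R where "R = (\<Prod>j<m. P j)"
  have R0: "R \<noteq> 0" using Suc.prems by (simp add: R_def prod_zero_iff)
  have dR: "degree R = S"
    unfolding R_def S_def using Suc.prems by (intro degree_prod_eq_sum_degree) auto
  have Pm: "P m \<noteq> 0" using Suc.prems by simp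
  have F0: "F > 0" by (simp add: F_def prod_pos)
  have ih: "(\<Prod>j<m. bw_norm (P j) ^ 2) \<le> fact S / F * bw_norm R ^ 2"
    using Suc by (simp add: S_def F_def R_def)
  have b2: "bw_norm R ^ 2 * bw_norm (P m) ^ 2 \<le>
      fact (S + degree (P m)) / (fact S * fact (degree (P m))) * bw_norm (R * P m) ^ 2"
    using bomb2[OF R0 Pm] dR by simp
  have "(\<Prod>j<Suc m. bw_norm (P j) ^ 2) = (\<Prod>j<m. bw_norm (P j) ^ 2) * bw_norm (P m) ^ 2" by simp
  also have "\<dots> \<le> fact S / F * bw_norm R ^ 2 * bw_norm (P m) ^ 2"
    by (intro mult_right_mono ih) auto
  also have "\<dots> = fact S / F * (bw_norm R ^ 2 * bw_norm (P m) ^ 2)" by simp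
  also have "\<dots> \<le> fact S / F * (fact (S + degree (P m)) / (fact S * fact (degree (P m))) * bw_norm (R * P m) ^ 2)"
    by (intro mult_left_mono b2) (use F0 in auto)
  also have "\<dots> = fact (S + degree (P m)) / (F * fact (degree (P m))) * bw_norm (R * P m) ^ 2"
    using F0 by (simp add: field_simps)
  also have "\<dots> = fact (\<Sum>j<Suc m. degree (P j)) / (\<Prod>j<Suc m. fact (degree (P j))) * bw_norm (\<Prod>j<Suc m. P j) ^ 2"
    by (simp add: S_def F_def R_def)
  finally show ?case .
qed


lemma ip_diff_left: "ip d (f - g) h = ip d f h - ip d g h"
  by (simp add: ip_def algebra_simps sum_subtractf)
lemma ip_diff_right: "ip d h (f - g) = ip d h f - ip d h g"
  by (simp add: ip_def algebra_simps sum_subtractf)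

lemma lin_eq: "[:-r, 1:] * h = mm True h - smult r (mm False h)"
  by (simp add: mm_def mult_pCons_left)

lemma lin_ip: assumes "degree h \<le> d"
  shows "ip (Suc d) ([:-r, 1:] * h) g = ip d h (pderiv g) - r * ip d h (dY (Suc d) g)"
  unfolding lin_eq ip_diff_left ip_smult_left adjoint[OF assms] by (simp add: dd_def)

lemma dY_lin: "dY 1 [:-r, 1:] = [:-r:]"
  by (simp add: dY_def pderiv_pCons)

lemma pderiv_lin: "pderiv [:-r, 1:] = 1"
  by (simp add: pderiv_pCons)

lemma bw_lin_step:
  assumes Q0: "Q \<noteq> 0"
  shows "bw_norm ([:-r, 1:] * Q) ^ 2 \<le> (1 + (cmod r)^2) * bw_norm Q ^ 2"
proof -
  define k where "k = degree Q"
  define l where "l = ([:-r, 1:] :: complex poly)"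
  have dQ: "degree Q \<le> k" by (simp add: k_def)
  have "degree (l * Q) = degree l + degree Q" unfolding l_def by (rule degree_mult_eq) (use Q0 in auto)
  hence dlQ: "degree (l * Q) = Suc k" by (simp add: l_def k_def)
  define N where "N = ip k Q Q"
  define X where "X = ip (Suc k) (l * Q) (l * Q)"
  have pl: "pderiv l = 1" by (simp add: l_def pderiv_lin)
  have px: "pderiv (l * Q) = Q + l * pderiv Q"
    by (simp only: pderiv_mult pl mult_1_right add.commute)
  have yl: "dY 1 l * Q = smult (-r) Q" using dY_lin[of r] by (simp add: l_def)
  have py: "dY (Suc k) (l * Q) = smult (-r) Q + l * dY k Q"
    using leibnizY[of 1 k l Q] unfolding yl by simp
  have X1: "X = (1 + r * cnj r) * N + ip k Q (l * pderiv Q) - r * ip k Q (l * dY k Q)"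
    unfolding X_def l_def lin_ip[OF dQ] unfolding l_def[symmetric] px py
    by (simp add: ip_add_right ip_diff_right ip_smult_right N_def algebra_simps)
  have rho: "r * cnj r = of_real ((cmod r)^2)" by (metis complex_norm_square of_real_power)
  have main: "Re X \<le> (1 + (cmod r)^2) * (real (Suc k) * Re N)"
  proof (cases k)
    case 0
    have "degree Q = 0" using dQ 0 by simp
    hence "pderiv Q = 0" "dY k Q = 0" using dd_deg0[of Q False] 0 by (auto simp: pderiv_eq_0_iff dd_def)
    thus ?thesis using X1 0 rho by simp
  next
    case (Suc k')
    define A where "A = pderiv Q"
    define D where "D = dY k Q"
    have dA: "degree A \<le> k'" using degree_dd[OF dQ, of True] Suc by (simp add: A_def dd_def)
    have dD: "degree D \<le> k'" using degree_dd[OF dQ, of False] Suc by (simp add: D_def dd_def)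
    have c1: "ip k Q (l * h) = ip k' (pderiv Q) h - cnj r * ip k' (dY k Q) h" if "degree h \<le> k'" for h
    proof -
      have "ip k Q (l * h) = cnj (ip (Suc k') (l * h) Q)" by (simp add: ip_cnj Suc)
      also have "\<dots> = cnj (ip k' h (pderiv Q) - r * ip k' h (dY k Q))"
        unfolding l_def lin_ip[OF that] Suc ..
      also have "\<dots> = ip k' (pderiv Q) h - cnj r * ip k' (dY k Q) h" by (simp add: ip_cnj)
      finally show ?thesis .
    qed
    have en: "of_nat k * N = ip k' A A + ip k' D D"
      using euler_norm[of Q k'] dQ Suc by (simp add: N_def sum_bool dd_def A_def D_def)
    define Z where "Z = ip k' (smult r A + D) (smult r A + D)"
    have Xe: "X = (1 + r * cnj r) * N + (1 + r * cnj r) * (ip k' A A + ip k' D D) - Z"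
      unfolding X1 c1[OF dA[unfolded A_def]] c1[OF dD[unfolded D_def]] Z_def
      unfolding A_def[symmetric] D_def[symmetric]
      by (simp add: ip_add_left ip_add_right ip_smult_left ip_smult_right algebra_simps)
    have "nn Z" by (simp add: Z_def nn_ip)
    hence "Re Z \<ge> 0" by (simp add: nn_def)
    moreover have e1: "Re (ip k' A A) + Re (ip k' D D) = real k * Re N"
      unfolding plus_complex.sel(1)[symmetric] en[symmetric] by simp
    ultimately have z: "Re Z \<ge> 0" and e1: "Re (ip k' A A) + Re (ip k' D D) = real k * Re N" by auto
    have "Re X = (1 + (cmod r)^2) * Re N + (1 + (cmod r)^2) * (Re (ip k' A A) + Re (ip k' D D)) - Re Z"
      unfolding Xe rho by simp
    also have "\<dots> = (1 + (cmod r)^2) * (real (Suc k) * Re N) - Re Z"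
      unfolding e1 by (simp add: algebra_simps)
    finally show ?thesis using z by simp
  qed
  have "bw_norm (l * Q) ^ 2 = Re X / fact (Suc k)" by (simp add: bw_sq dlQ X_def)
  also have "\<dots> \<le> (1 + (cmod r)^2) * (real (Suc k) * Re N) / fact (Suc k)"
    by (intro divide_right_mono main) auto
  also have "\<dots> = (1 + (cmod r)^2) * (Re N / fact k)"
  proof -
    have f: "fact (Suc k) = real (Suc k) * (fact k :: real)" by (rule fact_Suc)
    have "real (Suc k) > 0" "(fact k :: real) > 0" by auto
    thus ?thesis unfolding f by (simp only: field_simps) simp
  qed
  also have "\<dots> = (1 + (cmod r)^2) * bw_norm Q ^ 2" by (simp add: bw_sq k_def N_def)
  finally show ?thesis by (simp add: l_def)
qed

lemma bw_upper:
  assumes "finite I"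
  shows "bw_norm (smult c (\<Prod>i\<in>I. [:-rt i, 1:])) ^ 2 \<le> (cmod c)^2 * (\<Prod>i\<in>I. 1 + (cmod (rt i))^2)"
  using assms
proof (induction I rule: finite_induct)
  case empty
  show ?case by (simp add: bw_sq ip_0_eq complex_mult_cnj cmod_def)
next
  case (insert x I)
  show ?case
  proof (cases "c = 0")
    case True thus ?thesis by (simp add: bw_norm_def)
  next
    case False
    define Q where "Q = smult c (\<Prod>i\<in>I. [:-rt i, 1:])"
    have Q0: "Q \<noteq> 0" using False insert by (simp add: Q_def prod_zero_iff)
    have "smult c (\<Prod>i\<in>insert x I. [:-rt i, 1:]) = [:-rt x, 1:] * Q"
      using insert by (simp add: Q_def mult_smult_right)
    hence "bw_norm (smult c (\<Prod>i\<in>insert x I. [:-rt i, 1:])) ^ 2 \<le> (1 + (cmod (rt x))^2) * bw_norm Q ^ 2"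
      using bw_lin_step[OF Q0] by simp
    also have "\<dots> \<le> (1 + (cmod (rt x))^2) * ((cmod c)^2 * (\<Prod>i\<in>I. 1 + (cmod (rt i))^2))"
      using insert.IH by (intro mult_left_mono) (auto simp: Q_def)
    finally show ?thesis using insert by (simp add: algebra_simps)
  qed
qed


definition V :: "real \<Rightarrow> nat \<Rightarrow> complex poly \<Rightarrow> complex poly \<Rightarrow> complex" where
  "V s N f g = (\<Sum>i\<le>N. coeff f i * cnj (coeff g i) * of_real (s ^ i))"

lemma V_add_left: "V s N (f + g) h = V s N f h + V s N g h"
  by (simp add: V_def algebra_simps sum.distrib)
lemma V_add_right: "V s N h (f + g) = V s N h f + V s N h g"
  by (simp add: V_def algebra_simps sum.distrib)
lemma V_smult_left: "V s N (smult c f) h = c * V s N f h"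
  by (simp add: V_def sum_distrib_left algebra_simps)
lemma V_smult_right: "V s N h (smult c f) = cnj c * V s N h f"
  by (simp add: V_def sum_distrib_left algebra_simps)

lemma V_diff_left: "V s N (f - g) h = V s N f h - V s N g h"
  by (simp add: V_def algebra_simps sum_subtractf)
lemma V_diff_right: "V s N h (f - g) = V s N h f - V s N h g"
  by (simp add: V_def algebra_simps sum_subtractf)
lemma pCons_smult0: "pCons 0 (smult a f) = smult a (pCons 0 f)" by simp
lemma V_pCons_smult_left: "V s N (pCons 0 (smult a f)) h = a * V s N (pCons 0 f) h"
  unfolding pCons_smult0 V_smult_left ..
lemma V_pCons_smult_right: "V s N h (pCons 0 (smult a f)) = cnj a * V s N h (pCons 0 f)"
  unfolding pCons_smult0 V_smult_right ..

lemma V_shift: "V s (Suc N) (pCons 0 f) (pCons 0 g) = of_real s * V s N f g"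
  unfolding V_def by (subst sum.atMost_Suc_shift) (simp add: sum_distrib_left algebra_simps)

lemma V_Suc: "degree f \<le> N \<Longrightarrow> V s (Suc N) f g = V s N f g"
  by (simp add: V_def coeff_eq_0)

lemma Re_V_self: "Re (V s N F F) = (\<Sum>i\<le>N. (cmod (coeff F i))^2 * s ^ i)"
  unfolding V_def Re_sum
  by (intro sum.cong refl) (simp add: complex_mult_cnj cmod_def power2_eq_square)

lemma V_lin:
  assumes "degree R < N"
  shows "V s N ([:-b, a:] * R) ([:-b, a:] * R) =
     (b * cnj b + a * cnj a * of_real s) * V s N R R - b * cnj a * V s N R (pCons 0 R) - a * cnj b * V s N (pCons 0 R) R"
proof -
  obtain M where N: "N = Suc M" using assms by (cases N) auto
  have dR: "degree R \<le> M" using assms N by simp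
  have e: "[:-b, a:] * R = smult (-b) R + smult a (pCons 0 R)"
    by (simp add: mult_pCons_left)
  have "V s N (pCons 0 R) (pCons 0 R) = of_real s * V s N R R"
    unfolding N V_shift V_Suc[OF dR] ..
  thus ?thesis unfolding e
    by (simp add: V_add_left V_add_right V_diff_left V_diff_right V_smult_left V_smult_right
        V_pCons_smult_left V_pCons_smult_right algebra_simps)
qed

lemma V_swap:
  assumes dR: "degree R < N" and s: "s > 0"
  shows "V s N ([:-r, 1:] * R) ([:-r, 1:] * R) =
         V s N ([:-of_real (sqrt s), cnj r / of_real (sqrt s):] * R) ([:-of_real (sqrt s), cnj r / of_real (sqrt s):] * R)"
proof -
  define q where "q = sqrt s"
  define b where "b = (of_real q :: complex)"
  define a where "a = cnj r / b"
  have q0: "q > 0" using s by (simp add: q_def)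
  have b0: "b \<noteq> 0" using q0 by (simp add: b_def)
  have qq: "b * cnj b = of_real s" using s
    by (simp add: b_def q_def flip: of_real_mult)
  have c1: "b * cnj b + a * cnj a * of_real s = r * cnj r + 1 * cnj 1 * of_real s"
    unfolding a_def using qq b0 s by (simp add: field_simps)
  have cb: "cnj b = b" by (simp add: b_def)
  have c2: "b * cnj a = r * cnj 1" unfolding a_def using b0 cb by (simp add: field_simps)
  have c3: "a * cnj b = 1 * cnj r" unfolding a_def using b0 cb by (simp add: field_simps)
  have A: "V s N ([:-r, 1:] * R) ([:-r, 1:] * R) = (r * cnj r + 1 * cnj 1 * of_real s) * V s N R R
     - r * cnj 1 * V s N R (pCons 0 R) - 1 * cnj r * V s N (pCons 0 R) R"
    by (rule V_lin[OF dR])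
  have B: "V s N ([:-b, a:] * R) ([:-b, a:] * R) = (b * cnj b + a * cnj a * of_real s) * V s N R R
     - b * cnj a * V s N R (pCons 0 R) - a * cnj b * V s N (pCons 0 R) R"
    by (rule V_lin[OF dR])
  have "V s N ([:-r, 1:] * R) ([:-r, 1:] * R) = V s N ([:-b, a:] * R) ([:-b, a:] * R)"
    unfolding A B c1 c2 c3 ..
  thus ?thesis by (simp add: a_def b_def q_def)
qed

lemma linprod_nz: "(\<Prod>i\<in>I. [:-rt i, 1:]) \<noteq> (0::complex poly)"
  by (cases "finite I") (auto simp: prod_zero_iff)

lemma degree_linprod: fixes rt :: "'a \<Rightarrow> complex"
  shows "finite I \<Longrightarrow> degree (\<Prod>i\<in>I. [:-rt i, 1:]) = card I"
  using degree_prod_eq_sum_degree[of I "\<lambda>i. [:-rt i, 1:]"] by simp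

lemma lead_linprod: "lead_coeff (\<Prod>i\<in>I. [:-rt i, 1:]) = (1::complex)"
  by (simp add: lead_coeff_prod)

lemma Re_V_0[simp]: "V s N 0 0 = 0" by (simp add: V_def)

lemma landau:
  assumes s: "s > 0" and fin: "finite I"
  shows "degree Q + card I \<le> N \<Longrightarrow>
    (cmod (lead_coeff Q))^2 * s ^ degree Q * (\<Prod>i\<in>I. max s ((cmod (rt i))^2))
      \<le> Re (V s N (Q * (\<Prod>i\<in>I. [:-rt i, 1:])) (Q * (\<Prod>i\<in>I. [:-rt i, 1:])))"
  using fin
proof (induction I arbitrary: Q rule: finite_induct)
  case empty
  have "(cmod (coeff Q (degree Q)))^2 * s ^ degree Q \<le> (\<Sum>i\<le>N. (cmod (coeff Q i))^2 * s ^ i)"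
    by (rule member_le_sum[where f = "\<lambda>i. (cmod (coeff Q i))^2 * s ^ i"]) (use empty s in auto)
  thus ?case by (simp add: Re_V_self)
next
  case (insert x I)
  show ?case
  proof (cases "Q = 0")
    case True thus ?thesis by simp
  next
    case Q0: False
    define r where "r = rt x"
    define PI where "PI = (\<Prod>i\<in>I. [:-rt i, 1:])"
    have PI0: "PI \<noteq> 0" by (simp add: PI_def linprod_nz)
    have dPI: "degree PI = card I" using insert by (simp add: PI_def degree_linprod)
    have eqprod: "Q * (\<Prod>i\<in>insert x I. [:-rt i, 1:]) = (Q * [:-r, 1:]) * PI"
      using insert by (simp only: prod.insert[OF insert(1,2)] PI_def r_def mult.assoc)
    have cI: "card (insert x I) = Suc (card I)" using insert by simp
    have prodI: "(\<Prod>i\<in>insert x I. max s ((cmod (rt i))^2)) = max s ((cmod r)^2) * (\<Prod>i\<in>I. max s ((cmod (rt i))^2))"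
      using insert by (simp add: r_def)
    show ?thesis
    proof (cases "(cmod r)^2 \<le> s")
      case True
      have dq: "degree (Q * [:-r, 1:]) = Suc (degree Q)"
        using Q0 by (subst degree_mult_eq) auto
      have lq: "lead_coeff (Q * [:-r, 1:]) = lead_coeff Q" unfolding lead_coeff_mult by simp
      have IHx: "(cmod (lead_coeff (Q * [:-r, 1:])))^2 * s ^ degree (Q * [:-r, 1:]) * (\<Prod>i\<in>I. max s ((cmod (rt i))^2))
          \<le> Re (V s N ((Q * [:-r, 1:]) * PI) ((Q * [:-r, 1:]) * PI))"
        unfolding PI_def by (rule insert.IH) (use insert.prems cI dq in simp)
      have X: "(cmod (lead_coeff Q))^2 * s ^ Suc (degree Q) * (\<Prod>i\<in>I. max s ((cmod (rt i))^2))
          \<le> Re (V s N ((Q * [:-r, 1:]) * PI) ((Q * [:-r, 1:]) * PI))" using IHx[unfolded lq, unfolded dq] .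
      have m: "max s ((cmod r)^2) = s" using True by simp
      have E: "(cmod (lead_coeff Q))^2 * s ^ degree Q * (max s ((cmod r)^2) * (\<Prod>i\<in>I. max s ((cmod (rt i))^2)))
          = (cmod (lead_coeff Q))^2 * s ^ Suc (degree Q) * (\<Prod>i\<in>I. max s ((cmod (rt i))^2))"
        unfolding m by (simp only: power_Suc ac_simps)
      show ?thesis unfolding eqprod prodI using X E by linarith
    next
      case False
      hence r0: "r \<noteq> 0" using s by auto
      define a where "a = cnj r / of_real (sqrt s)"
      define b where "b = (of_real (sqrt s) :: complex)"
      have a0: "a \<noteq> 0" using r0 s by (simp add: a_def)
      have dR: "degree (Q * PI) < N" using insert.prems cI Q0 PI0 dPI by (simp add: degree_mult_eq)
      have swap: "V s N ([:-r, 1:] * (Q * PI)) ([:-r, 1:] * (Q * PI)) = V s N ([:-b, a:] * (Q * PI)) ([:-b, a:] * (Q * PI))"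
        unfolding a_def b_def by (rule V_swap[OF dR s])
      have dq: "degree (Q * [:-b, a:]) = Suc (degree Q)"
        using Q0 a0 by (subst degree_mult_eq) auto
      have lq: "lead_coeff (Q * [:-b, a:]) = lead_coeff Q * a" using a0 unfolding lead_coeff_mult by simp
      have ca: "(cmod a)^2 = (cmod r)^2 / s" using s by (simp add: a_def norm_divide power_divide)
      have "(cmod (lead_coeff (Q * [:-b, a:])))^2 * s ^ degree (Q * [:-b, a:]) * (\<Prod>i\<in>I. max s ((cmod (rt i))^2))
          \<le> Re (V s N ((Q * [:-b, a:]) * PI) ((Q * [:-b, a:]) * PI))"
        unfolding PI_def by (rule insert.IH) (use insert.prems cI dq in simp)
      also have "(Q * [:-b, a:]) * PI = [:-b, a:] * (Q * PI)" by (simp only: ac_simps)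
      also have "(Q * [:-r, 1:]) * PI = [:-r, 1:] * (Q * PI)" by (simp only: ac_simps)
      note swap[symmetric]
      finally have main: "(cmod (lead_coeff (Q * [:-b, a:])))^2 * s ^ degree (Q * [:-b, a:]) * (\<Prod>i\<in>I. max s ((cmod (rt i))^2))
          \<le> Re (V s N ([:-r, 1:] * (Q * PI)) ([:-r, 1:] * (Q * PI)))" .
      have "(cmod (lead_coeff (Q * [:-b, a:])))^2 * s ^ degree (Q * [:-b, a:])
          = (cmod (lead_coeff Q))^2 * s ^ degree Q * max s ((cmod r)^2)"
        unfolding lq unfolding dq norm_mult power_mult_distrib ca using s False by (simp add: max_def field_simps)
      moreover have "(Q * [:-r, 1:]) * PI = [:-r, 1:] * (Q * PI)" by (simp only: ac_simps)
      ultimately show ?thesis using main unfolding eqprod prodI by (simp only: ac_simps)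
    qed
  qed
qed


lemma mono_int:
  assumes "i \<le> n"
  shows "((\<lambda>t. t ^ i * (1 - t) ^ (n - i)) has_integral (fact i * fact (n - i) / fact (Suc n))) {0<..<(1::real)}"
proof -
  have "((\<lambda>t. t powr (real (Suc i) - 1) * (1 - t) powr (real (Suc (n - i)) - 1)) has_integral
      Beta (real (Suc i)) (real (Suc (n - i)))) {0..1}"
    by (rule has_integral_Beta_real) auto
  hence "((\<lambda>t. t powr (real (Suc i) - 1) * (1 - t) powr (real (Suc (n - i)) - 1)) has_integral
      Beta (real (Suc i)) (real (Suc (n - i)))) {0<..<1}"
    by (simp add: has_integral_Icc_iff_Ioo)
  hence "((\<lambda>t. t ^ i * (1 - t) ^ (n - i)) has_integral Beta (real (Suc i)) (real (Suc (n - i)))) {0<..<1}"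
    by (rule has_integral_eq[rotated]) (auto simp: powr_realpow)
  moreover have "Beta (real (Suc i)) (real (Suc (n - i))) = fact i * fact (n - i) / fact (Suc n)"
  proof -
    have g: "Gamma (real (Suc m)) = fact m" for m
      using Gamma_fact[of m, where 'a = real] by (simp add: add.commute)
    have s: "real (Suc i) + real (Suc (n - i)) = real (Suc (Suc n))" using assms by simp
    show ?thesis unfolding Beta_def s g ..
  qed
  ultimately show ?thesis by simp
qed

lemma cont_xlnx: "continuous_on {0..1} (\<lambda>t::real. t * ln t - t)"
proof (rule continuous_on_eq_continuous_within[THEN iffD2], intro ballI)
  fix x :: real assume x: "x \<in> {0..1}"
  show "continuous (at x within {0..1}) (\<lambda>t. t * ln t - t)"
  proof (cases "x = 0")
    case True
    have "((\<lambda>t::real. t * ln t - t) \<longlongrightarrow> 0) (at_right 0)" by real_asymp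
    hence "((\<lambda>t::real. t * ln t - t) \<longlongrightarrow> 0) (at 0 within {0..1})"
      by (simp add: at_within_Icc_at_right)
    thus ?thesis using True by (simp add: continuous_within)
  next
    case False
    hence "x > 0" using x by auto
    hence "isCont (\<lambda>t. t * ln t - t) x" by (auto intro!: continuous_intros)
    thus ?thesis by (rule continuous_at_imp_continuous_within)
  qed
qed

lemma ln_int:
  assumes rho: "\<rho> \<ge> 0"
  shows "((\<lambda>t. ln (max t ((1 - t) * \<rho>))) has_integral (ln (1 + \<rho>) - 1)) {0<..<(1::real)}"
proof -
  define t0 where "t0 = \<rho> / (1 + \<rho>)"
  have t0: "0 \<le> t0" "t0 < 1" using rho by (auto simp: t0_def field_simps)
  define G1 where "G1 t = t * ln \<rho> - (1 - t) * ln (1 - t) - t" for t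
  define F2 where "F2 t = t * ln t - t" for t :: real
  have le1: "t \<le> (1 - t) * \<rho>" if "t \<le> t0" for t
    using that rho by (simp add: t0_def field_simps)
  have ge1: "(1 - t) * \<rho> \<le> t" if "t0 \<le> t" for t
    using that rho by (simp add: t0_def field_simps)
  have A: "((\<lambda>t. ln ((1 - t) * \<rho>)) has_integral (G1 t0 - G1 0)) {0..t0}"
  proof (rule fundamental_theorem_of_calculus_interior)
    show "0 \<le> t0" by fact
    show "continuous_on {0..t0} G1" unfolding G1_def using t0
      by (intro continuous_intros) auto
    fix x assume x: "x \<in> {0<..<t0}"
    hence r0: "\<rho> > 0" using rho t0_def by (cases "\<rho> = 0") auto
    have x1: "x < 1" "x > 0" using x t0 by auto
    have "(G1 has_real_derivative (ln \<rho> - (- ln (1 - x) + (1 - x) * (- 1 / (1 - x))) - 1)) (at x)"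
      unfolding G1_def using x1 by (auto intro!: derivative_eq_intros)
    moreover have "ln \<rho> - (- ln (1 - x) + (1 - x) * (- 1 / (1 - x))) - 1 = ln ((1 - x) * \<rho>)"
      using x1 r0 by (simp add: ln_mult)
    ultimately show "(G1 has_vector_derivative ln ((1 - x) * \<rho>)) (at x)"
      by (simp add: has_real_derivative_iff_has_vector_derivative)
  qed
  have A': "((\<lambda>t. ln (max t ((1 - t) * \<rho>))) has_integral (G1 t0 - G1 0)) {0..t0}"
    using A by (rule has_integral_eq[rotated]) (auto dest: le1 simp: max_def)
  have B: "(ln has_integral (F2 1 - F2 t0)) {t0..1}"
  proof (rule fundamental_theorem_of_calculus_interior)
    show "t0 \<le> 1" using t0 by simp
    show "continuous_on {t0..1} F2" unfolding F2_def
      by (rule continuous_on_subset[OF cont_xlnx]) (use t0 in auto)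
    fix x assume x: "x \<in> {t0<..<1}"
    hence x0: "x > 0" using t0 by auto
    have "(F2 has_real_derivative (ln x + x * (1 / x) - 1)) (at x)"
      unfolding F2_def using x0 by (auto intro!: derivative_eq_intros)
    thus "(F2 has_vector_derivative ln x) (at x)"
      using x0 by (simp add: has_real_derivative_iff_has_vector_derivative)
  qed
  have B': "((\<lambda>t. ln (max t ((1 - t) * \<rho>))) has_integral (F2 1 - F2 t0)) {t0..1}"
    using B by (rule has_integral_eq[rotated]) (auto dest: ge1 simp: max_def)
  have C: "((\<lambda>t. ln (max t ((1 - t) * \<rho>))) has_integral (G1 t0 - G1 0 + (F2 1 - F2 t0))) {0..1}"
    by (rule has_integral_combine[OF t0(1) _ A' B']) (use t0 in simp)
  have val: "G1 t0 - G1 0 + (F2 1 - F2 t0) = ln (1 + \<rho>) - 1"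
  proof (cases "\<rho> = 0")
    case True thus ?thesis by (simp add: G1_def F2_def t0_def)
  next
    case False
    hence r0: "\<rho> > 0" using rho by simp
    have l1: "ln t0 = ln \<rho> - ln (1 + \<rho>)" using r0 by (simp add: t0_def ln_div)
    have l2: "1 - t0 = 1 / (1 + \<rho>)" using r0 by (simp add: t0_def field_simps)
    have l3: "ln (1 - t0) = - ln (1 + \<rho>)" unfolding l2 using r0 by (simp add: ln_div)
    have "G1 t0 - G1 0 + (F2 1 - F2 t0) = t0 * ln \<rho> - t0 * ln t0 - (1 - t0) * ln (1 - t0) - 1"
      by (simp add: G1_def F2_def)
    also have "\<dots> = ln (1 + \<rho>) - 1" unfolding l1 l3 by (simp add: algebra_simps)
    finally show ?thesis .
  qed
  show ?thesis using C unfolding val by (simp add: has_integral_Icc_iff_Ioo)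
qed


lemma one_int: "((\<lambda>t. 1::real) has_integral 1) {0<..<(1::real)}"
  using mono_int[of 0 0] by simp

lemma jensen_prod:
  fixes \<rho> :: "'a \<Rightarrow> real"
  assumes fin: "finite I" and nn: "\<And>i. i \<in> I \<Longrightarrow> \<rho> i \<ge> 0"
  shows "(\<lambda>t. \<Prod>i\<in>I. max t ((1 - t) * \<rho> i)) integrable_on {0<..<1}"
    and "exp (\<Sum>i\<in>I. ln (1 + \<rho> i) - 1) \<le> integral {0<..<1} (\<lambda>t. \<Prod>i\<in>I. max t ((1 - t) * \<rho> i))"
proof -
  have "continuous_on {0..1} (\<lambda>t. \<Prod>i\<in>I. max t ((1 - t) * \<rho> i))"
    by (intro continuous_intros)
  hence "(\<lambda>t. \<Prod>i\<in>I. max t ((1 - t) * \<rho> i)) integrable_on {0..1}"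
    by (rule integrable_continuous_real)
  thus int: "(\<lambda>t. \<Prod>i\<in>I. max t ((1 - t) * \<rho> i)) integrable_on {0<..<1}"
    by (simp add: integrable_on_Icc_iff_Ioo)
  define M where "M = (\<Sum>i\<in>I. ln (1 + \<rho> i) - 1)"
  define L where "L t = (\<Sum>i\<in>I. ln (max t ((1 - t) * \<rho> i)))" for t
  have LI: "(L has_integral M) {0<..<1}"
    unfolding L_def M_def by (rule has_integral_sum[OF fin]) (rule ln_int[OF nn])
  have MI: "((\<lambda>t::real. M) has_integral M) {0<..<1}"
    using has_integral_mult_right[OF one_int, of M] by simp
  have HI: "((\<lambda>t. exp M * (1 + (L t - M))) has_integral exp M * (1 + (M - M))) {0<..<1}"
    by (intro has_integral_mult_right has_integral_add one_int has_integral_diff LI MI)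
  have pt: "exp M * (1 + (L t - M)) \<le> (\<Prod>i\<in>I. max t ((1 - t) * \<rho> i))" if t: "t \<in> {0<..<1}" for t
  proof -
    have pos: "max t ((1 - t) * \<rho> i) > 0" for i using t by auto
    have "(\<Prod>i\<in>I. max t ((1 - t) * \<rho> i)) = exp (L t)"
      unfolding L_def exp_sum[OF fin] using pos by simp
    also have "exp (L t) = exp M * exp (L t - M)" by (simp add: exp_diff)
    also have "exp M * (1 + (L t - M)) \<le> exp M * exp (L t - M)"
      by (intro mult_left_mono exp_ge_add_one_self) auto
    ultimately show ?thesis by simp
  qed
  have "exp M * (1 + (M - M)) \<le> integral {0<..<1} (\<lambda>t. \<Prod>i\<in>I. max t ((1 - t) * \<rho> i))"
    by (rule has_integral_le[OF HI integrable_integral[OF int] pt])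
  thus "exp (\<Sum>i\<in>I. ln (1 + \<rho> i) - 1) \<le> integral {0<..<1} (\<lambda>t. \<Prod>i\<in>I. max t ((1 - t) * \<rho> i))"
    by (simp add: M_def)
qed


lemma bw_integral:
  "((\<lambda>t. \<Sum>i\<le>degree P. (cmod (coeff P i))^2 * (t ^ i * (1 - t) ^ (degree P - i))) has_integral
     bw_norm P ^ 2 / real (Suc (degree P))) {0<..<1}"
proof -
  define n where "n = degree P"
  have "((\<lambda>t. \<Sum>i\<le>n. (cmod (coeff P i))^2 * (t ^ i * (1 - t) ^ (n - i))) has_integral
      (\<Sum>i\<le>n. (cmod (coeff P i))^2 * (fact i * fact (n - i) / fact (Suc n)))) {0<..<1}"
    by (intro has_integral_sum has_integral_mult_right mono_int) auto
  moreover have "(\<Sum>i\<le>n. (cmod (coeff P i))^2 * (fact i * fact (n - i) / fact (Suc n))) = bw_norm P ^ 2 / real (Suc n)"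
  proof -
    have "bw_norm P ^ 2 / real (Suc n) = Re (ip n P P) / (fact n * real (Suc n))"
      by (simp add: bw_sq n_def)
    also have "fact n * real (Suc n) = fact (Suc n)" by (simp add: algebra_simps)
    also have "Re (ip n P P) / fact (Suc n) = (\<Sum>i\<le>n. (cmod (coeff P i))^2 * (fact i * fact (n - i) / fact (Suc n)))"
      unfolding Re_ip_self by (simp add: sum_divide_distrib)
    finally show ?thesis by simp
  qed
  ultimately show ?thesis by (simp add: n_def)
qed

lemma pointwise:
  assumes fin: "finite I" and t: "t \<in> {0<..<1}"
  shows "(cmod c)^2 * (\<Prod>i\<in>I. max t ((1 - t) * (cmod (rt i))^2)) \<le>
    (\<Sum>i\<le>card I. (cmod (coeff (smult c (\<Prod>i\<in>I. [:-rt i, 1:])) i))^2 * (t ^ i * (1 - t) ^ (card I - i)))"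
proof -
  define s where "s = t / (1 - t)"
  define n where "n = card I"
  define P where "P = smult c (\<Prod>i\<in>I. [:-rt i, 1:])"
  have t0: "0 < t" "t < 1" using t by auto
  have s0: "s > 0" using t0 by (simp add: s_def)
  have l: "(cmod (lead_coeff [:c:]))^2 * s ^ degree [:c:] * (\<Prod>i\<in>I. max s ((cmod (rt i))^2))
      \<le> Re (V s n ([:c:] * (\<Prod>i\<in>I. [:-rt i, 1:])) ([:c:] * (\<Prod>i\<in>I. [:-rt i, 1:])))"
    by (rule landau[OF s0 fin]) (simp add: n_def)
  hence l2: "(cmod c)^2 * (\<Prod>i\<in>I. max s ((cmod (rt i))^2)) \<le> (\<Sum>i\<le>n. (cmod (coeff P i))^2 * s ^ i)"
    by (simp add: Re_V_self P_def)
  have "(1 - t) ^ n * ((cmod c)^2 * (\<Prod>i\<in>I. max s ((cmod (rt i))^2))) \<le>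
      (1 - t) ^ n * (\<Sum>i\<le>n. (cmod (coeff P i))^2 * s ^ i)"
    by (rule mult_left_mono[OF l2]) (use t0 in simp)
  moreover have "(1 - t) ^ n * (\<Prod>i\<in>I. max s ((cmod (rt i))^2)) = (\<Prod>i\<in>I. max t ((1 - t) * (cmod (rt i))^2))"
  proof -
    have "(1 - t) ^ n * (\<Prod>i\<in>I. max s ((cmod (rt i))^2)) = (\<Prod>i\<in>I. (1 - t) * max s ((cmod (rt i))^2))"
      by (simp add: prod.distrib n_def)
    also have "\<dots> = (\<Prod>i\<in>I. max t ((1 - t) * (cmod (rt i))^2))"
    proof (rule prod.cong[OF refl])
      fix i
      have "(1 - t) * s = t" using t0 by (simp add: s_def)
      thus "(1 - t) * max s ((cmod (rt i))^2) = max t ((1 - t) * (cmod (rt i))^2)"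
        using t0 by (simp add: max_mult_distrib_left)
    qed
    finally show ?thesis .
  qed
  moreover have "(1 - t) ^ n * (\<Sum>i\<le>n. (cmod (coeff P i))^2 * s ^ i) =
      (\<Sum>i\<le>n. (cmod (coeff P i))^2 * (t ^ i * (1 - t) ^ (n - i)))"
    unfolding sum_distrib_left
  proof (rule sum.cong[OF refl])
    fix i assume "i \<in> {..n}"
    hence "n = i + (n - i)" by simp
    hence "(1 - t) ^ n = (1 - t) ^ i * (1 - t) ^ (n - i)" by (metis power_add)
    moreover have "(1 - t) ^ i * s ^ i = t ^ i" using t0 by (simp add: s_def power_divide)
    ultimately show "(1 - t) ^ n * ((cmod (coeff P i))^2 * s ^ i) = (cmod (coeff P i))^2 * (t ^ i * (1 - t) ^ (n - i))"
      by (metis (no_types, lifting) mult.assoc mult.commute)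
  qed
  ultimately show ?thesis by (simp add: P_def n_def algebra_simps)
qed

lemma bw_lower:
  assumes fin: "finite I" and c0: "c \<noteq> 0"
  shows "real (Suc (card I)) * exp (- real (card I)) * ((cmod c)^2 * (\<Prod>i\<in>I. 1 + (cmod (rt i))^2))
      \<le> bw_norm (smult c (\<Prod>i\<in>I. [:-rt i, 1:])) ^ 2"
proof -
  define P where "P = smult c (\<Prod>i\<in>I. [:-rt i, 1:])"
  define n where "n = card I"
  have dP: "degree P = n" using c0 fin by (simp add: P_def n_def degree_linprod)
  define phi where "phi t = (\<Prod>i\<in>I. max t ((1 - t) * (cmod (rt i))^2))" for t
  have J: "phi integrable_on {0<..<1}" "exp (\<Sum>i\<in>I. ln (1 + (cmod (rt i))^2) - 1) \<le> integral {0<..<1} phi"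
    unfolding phi_def by (rule jensen_prod[OF fin], simp)+
  have BI: "((\<lambda>t. \<Sum>i\<le>n. (cmod (coeff P i))^2 * (t ^ i * (1 - t) ^ (n - i))) has_integral
     bw_norm P ^ 2 / real (Suc n)) {0<..<1}"
    using bw_integral[of P] unfolding dP .
  have CI: "((\<lambda>t. (cmod c)^2 * phi t) has_integral (cmod c)^2 * integral {0<..<1} phi) {0<..<1}"
    by (rule has_integral_mult_right[OF integrable_integral[OF J(1)]])
  have le: "(cmod c)^2 * integral {0<..<1} phi \<le> bw_norm P ^ 2 / real (Suc n)"
    by (rule has_integral_le[OF CI BI]) (use pointwise[OF fin] in \<open>simp add: phi_def P_def n_def\<close>)
  have ex: "exp (\<Sum>i\<in>I. ln (1 + (cmod (rt i))^2) - 1) = exp (- real n) * (\<Prod>i\<in>I. 1 + (cmod (rt i))^2)"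
  proof -
    have "exp (\<Sum>i\<in>I. ln (1 + (cmod (rt i))^2) - 1) = (\<Prod>i\<in>I. exp (- 1) * (1 + (cmod (rt i))^2))"
      unfolding exp_sum[OF fin] by (intro prod.cong refl) (simp add: exp_diff exp_minus field_simps add_pos_nonneg)
    also have "\<dots> = exp (- 1) ^ n * (\<Prod>i\<in>I. 1 + (cmod (rt i))^2)"
      by (simp add: prod.distrib n_def)
    also have "exp (- 1) ^ n = exp (- real n)" by (simp add: exp_of_nat_mult[symmetric])
    finally show ?thesis .
  qed
  have "(cmod c)^2 * (exp (- real n) * (\<Prod>i\<in>I. 1 + (cmod (rt i))^2)) \<le> (cmod c)^2 * integral {0<..<1} phi"
    by (rule mult_left_mono) (use J(2) ex in auto)
  also note le
  finally have "(cmod c)^2 * (exp (- real n) * (\<Prod>i\<in>I. 1 + (cmod (rt i))^2)) \<le> bw_norm P ^ 2 / real (Suc n)" .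
  hence "real (Suc n) * ((cmod c)^2 * (exp (- real n) * (\<Prod>i\<in>I. 1 + (cmod (rt i))^2))) \<le> bw_norm P ^ 2"
    by (simp add: field_simps)
  thus ?thesis by (simp add: P_def n_def algebra_simps)
qed


lemma bw_nonneg: "bw_norm P \<ge> 0"
  unfolding bw_norm_def by (intro real_sqrt_ge_zero sum_nonneg) auto

lemma prod_smult: fixes m :: nat
  shows "(\<Prod>j<m. smult (c j) (Q j)) = smult (\<Prod>j<m. c j) (\<Prod>j<m. (Q j :: complex poly))"
  by (induction m) (simp_all add: mult_smult_left mult_smult_right ac_simps)

lemma sqrt_bound:
  assumes "Y \<ge> 0" "X \<ge> 0" "F \<ge> 0" "Y ^ 2 \<le> F * X ^ 2"
  shows "Y \<le> sqrt F * X"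
proof -
  have "Y = sqrt (Y ^ 2)" using assms by simp
  also have "\<dots> \<le> sqrt (F * X ^ 2)" by (rule real_sqrt_le_mono[OF assms(4)])
  also have "\<dots> = sqrt F * X" using assms by (simp add: real_sqrt_mult)
  finally show ?thesis .
qed

lemma boundB:
  fixes m :: nat and P :: "nat \<Rightarrow> complex poly"
  assumes nz: "\<And>j. j < m \<Longrightarrow> P j \<noteq> 0"
  shows "(\<Prod>j<m. bw_norm (P j) ^ 2) \<le>
    exp (real (\<Sum>j<m. degree (P j))) / (real (\<Sum>j<m. degree (P j)) + 1) * bw_norm (\<Prod>j<m. P j) ^ 2"
proof -
  have "\<forall>j. \<exists>root. smult (lead_coeff (P j)) (\<Prod>i<degree (P j). [:-root i, 1:]) = P j"
    using complex_poly_decompose' by metis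
  then obtain R where R: "\<And>j. smult (lead_coeff (P j)) (\<Prod>i<degree (P j). [:-R j i, 1:]) = P j"
    by metis
  define c where "c j = lead_coeff (P j)" for j
  define k where "k j = degree (P j)" for j
  define I where "I = (SIGMA j:{..<m}. {..<k j})"
  define rt where "rt = (\<lambda>(j, i). R j i)"
  define n where "n = (\<Sum>j<m. k j)"
  have finI: "finite I" by (simp add: I_def)
  have cI: "card I = n" by (simp add: I_def n_def card_SigmaI)
  have c0: "(\<Prod>j<m. c j) \<noteq> 0" using nz by (simp add: c_def)
  have up: "bw_norm (P j) ^ 2 \<le> (cmod (c j))^2 * (\<Prod>i<k j. 1 + (cmod (R j i))^2)" for j
    using bw_upper[of "{..<k j}" "c j" "R j"] R[of j] by (simp add: c_def k_def)
  have "(\<Prod>j<m. bw_norm (P j) ^ 2) \<le> (\<Prod>j<m. (cmod (c j))^2 * (\<Prod>i<k j. 1 + (cmod (R j i))^2))"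
    by (intro prod_mono) (use up in auto)
  also have "\<dots> = (cmod (\<Prod>j<m. c j))^2 * (\<Prod>x\<in>I. 1 + (cmod (rt x))^2)"
  proof -
    have 1: "(\<Prod>j<m. (cmod (c j))^2) = (cmod (\<Prod>j<m. c j))^2" by (simp add: prod_norm[symmetric] prod_power_distrib)
    have 2: "(\<Prod>j<m. \<Prod>i<k j. 1 + (cmod (R j i))^2) = (\<Prod>x\<in>I. 1 + (cmod (rt x))^2)"
      by (simp add: I_def rt_def prod.Sigma split_def)
    show ?thesis by (simp only: prod.distrib 1 2)
  qed
  finally have U: "(\<Prod>j<m. bw_norm (P j) ^ 2) \<le> (cmod (\<Prod>j<m. c j))^2 * (\<Prod>x\<in>I. 1 + (cmod (rt x))^2)" .
  have Pprod: "(\<Prod>j<m. P j) = smult (\<Prod>j<m. c j) (\<Prod>x\<in>I. [:-rt x, 1:])"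
  proof -
    have "(\<Prod>j<m. P j) = (\<Prod>j<m. smult (c j) (\<Prod>i<k j. [:-R j i, 1:]))"
      using R by (simp add: c_def k_def)
    also have "\<dots> = smult (\<Prod>j<m. c j) (\<Prod>j<m. \<Prod>i<k j. [:-R j i, 1:])" by (rule prod_smult)
    also have "(\<Prod>j<m. \<Prod>i<k j. [:-R j i, 1:]) = (\<Prod>x\<in>I. [:-rt x, 1:])"
      by (simp add: I_def rt_def prod.Sigma split_def)
    finally show ?thesis .
  qed
  have L: "real (Suc n) * exp (- real n) * ((cmod (\<Prod>j<m. c j))^2 * (\<Prod>x\<in>I. 1 + (cmod (rt x))^2))
      \<le> bw_norm (\<Prod>j<m. P j) ^ 2"
    using bw_lower[OF finI c0, of rt] unfolding cI Pprod .
  have pos: "real (Suc n) * exp (- real n) > 0" by simp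
  have "(cmod (\<Prod>j<m. c j))^2 * (\<Prod>x\<in>I. 1 + (cmod (rt x))^2) \<le> bw_norm (\<Prod>j<m. P j) ^ 2 / (real (Suc n) * exp (- real n))"
    using L pos by (simp add: field_simps)
  also have "\<dots> = exp (real n) / (real n + 1) * bw_norm (\<Prod>j<m. P j) ^ 2"
    by (simp add: exp_minus field_simps)
  finally show ?thesis using U by (simp add: n_def k_def)
qed

theorem theorem5p1:
  fixes m :: nat and P :: "nat \<Rightarrow> complex poly"
  assumes "m \<ge> 1"
    and "\<And>j. j < m \<Longrightarrow> P j \<noteq> 0"
    and "\<And>j. j < m \<Longrightarrow> degree (P j) \<ge> 1"
  shows "(\<Prod>j<m. bw_norm (P j)) \<le>
    min (sqrt (fact (\<Sum>j<m. degree (P j)) / (\<Prod>j<m. fact (degree (P j)))))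
        (sqrt (exp (real (\<Sum>j<m. degree (P j))) / (real (\<Sum>j<m. degree (P j)) + 1)))
    * bw_norm (\<Prod>j<m. P j)"
proof -
  define Y where "Y = (\<Prod>j<m. bw_norm (P j))"
  define X where "X = bw_norm (\<Prod>j<m. P j)"
  have Y0: "Y \<ge> 0" unfolding Y_def by (intro prod_nonneg) (simp add: bw_nonneg)
  have X0: "X \<ge> 0" by (simp add: X_def bw_nonneg)
  have Y2: "Y ^ 2 = (\<Prod>j<m. bw_norm (P j) ^ 2)" by (simp add: Y_def prod_power_distrib)
  have a: "Y \<le> sqrt (fact (\<Sum>j<m. degree (P j)) / (\<Prod>j<m. fact (degree (P j)))) * X"
  proof (rule sqrt_bound[OF Y0 X0])
    show "0 \<le> fact (\<Sum>j<m. degree (P j)) / (\<Prod>j<m. fact (degree (P j)) :: real)"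
      by (intro divide_nonneg_nonneg prod_nonneg) auto
    show "Y\<^sup>2 \<le> fact (\<Sum>j<m. degree (P j)) / (\<Prod>j<m. fact (degree (P j))) * X\<^sup>2"
      using bombA[of m P] assms(2) Y2 by (simp add: X_def)
  qed
  have b: "Y \<le> sqrt (exp (real (\<Sum>j<m. degree (P j))) / (real (\<Sum>j<m. degree (P j)) + 1)) * X"
  proof (rule sqrt_bound[OF Y0 X0])
    show "0 \<le> exp (real (\<Sum>j<m. degree (P j))) / (real (\<Sum>j<m. degree (P j)) + 1)"
      by (rule divide_nonneg_nonneg, simp, rule add_nonneg_nonneg, rule of_nat_0_le_iff, simp)
    show "Y\<^sup>2 \<le> exp (real (\<Sum>j<m. degree (P j))) / (real (\<Sum>j<m. degree (P j)) + 1) * X\<^sup>2"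
      using boundB[of m P] assms(2) Y2 by (simp add: X_def)
  qed
  show ?thesis using a b X0 unfolding Y_def[symmetric] X_def[symmetric]
    by (cases "sqrt (fact (\<Sum>j<m. degree (P j)) / (\<Prod>j<m. fact (degree (P j)))) \<le>
         sqrt (exp (real (\<Sum>j<m. degree (P j))) / (real (\<Sum>j<m. degree (P j)) + 1))") (auto simp: min_def)
qed


end
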